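(* Let $\Phi=\forall u_1\ldots\forall u_n\exists e_1(D_1)\ldots\exists e_m(D_m).\varphi$ be a DQBF, let $\tau$ be a (partial) assignment to a set $A$ of arbiter variables, and let $\rho\in[U]$. If $\varphi^\rho\wedge\tau^\rho$ is unsatisfiable, then some subclause of the clause $\neg\tau^\rho$ (the disjunction of the negations of the literals in $\tau^\rho$) is derivable from $\Phi$ in the $\forall$Exp+Res calculus.
   Context: For a set $V$ of variables, $[V]$ is the set of assignments $V\to\{\textsc{true},\textsc{false}\}$; assignments are identified with terms of the literals they make true, and $\sigma|_W$ denotes restriction. A DQBF is $\Phi=\forall u_1\ldots\forall u_n\exists e_1(D_1)\ldots\exists e_m(D_m).\varphi$ with pairwise distinct variables, $U=\{u_i\}$, $E=\{e_j\}$, dependency sets $D(e_j)=D_j\subseteq U$, and $\varphi$ a CNF over $U\cup E$. For $e\in E$ and $\sigma\in[D(e)]$, $e^\sigma$ denotes an annotated (arbiter) variable, different annotations giving different variables; for a literal $\ell$ on $e$, $\ell^\sigma$ is the literal on $e^\sigma$ of the same polarity. For a partial assignment $\tau$ to arbiter variables and $\rho\in[U]$, $\tau^\rho=\{\ell^\sigma\in\tau\mid\rho\models\sigma\}$. For $\rho\in[U]$, $\varphi^\rho=\{\{x^{\rho|_{D(\mathit{var}(x))}}\mid x\in C,\ \mathit{var}(x)\in E\}\mid C\in\varphi,\ \text{no universal literal of }C\text{ is satisfied by }\rho\}$. The $\forall$Exp+Res calculus for $\Phi$ has two rules: (axiom) for any clause $C\in\varphi$ and any $\sigma\in[U]$ falsifying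 every universal literal of $C$, derive $\{\ell^{\sigma|_{D(\mathit{var}(\ell))}}\mid\ell\in C,\ \mathit{var}(\ell)\in E\}$; (resolution) from $C_1\cup\{x^\tau\}$ and $C_2\cup\{\neg x^\tau\}$ derive $C_1\cup C_2$. A clause is derivable from $\Phi$ if it is the last clause of a finite sequence each of whose clauses is obtained by one of these rules from earlier clauses. *)

theory Defs
  imports Main
begin

datatype 'a lit = Pos 'a | Neg 'a

fun var :: "'a lit \<Rightarrow> 'a" where
  "var (Pos x) = x" | "var (Neg x) = x"

fun negate :: "'a lit \<Rightarrow> 'a lit" where
  "negate (Pos x) = Neg x" | "negate (Neg x) = Pos x"

type_synonym 'a clause = "'a lit set"
type_synonym 'a cnf = "'a clause set"

definition assignments :: "'v set \<Rightarrow> ('v \<rightharpoonup> bool) set" where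
  "assignments V = {\<sigma>. dom \<sigma> = V}"

fun lit_true :: "('v \<rightharpoonup> bool) \<Rightarrow> 'v lit \<Rightarrow> bool" where
  "lit_true \<rho> (Pos x) = (\<rho> x = Some True)"
| "lit_true \<rho> (Neg x) = (\<rho> x = Some False)"

text \<open>rho models sigma (sigma seen as a term): sigma agrees with rho on dom sigma.\<close>
definition models :: "('v \<rightharpoonup> bool) \<Rightarrow> ('v \<rightharpoonup> bool) \<Rightarrow> bool" where
  "models \<rho> \<sigma> \<longleftrightarrow> \<sigma> \<subseteq>\<^sub>m \<rho>"

definition dqbf :: "'v set \<Rightarrow> 'v set \<Rightarrow> ('v \<Rightarrow> 'v set) \<Rightarrow> 'v cnf \<Rightarrow> bool" where
  "dqbf U E D \<phi> \<longleftrightarrow> finite U \<and> finite E \<and> U \<inter> E = {} \<and>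
     (\<forall>e\<in>E. D e \<subseteq> U) \<and> finite \<phi> \<and>
     (\<forall>C\<in>\<phi>. finite C \<and> (\<forall>l\<in>C. var l \<in> U \<union> E))"

text \<open>Arbiter variables: pairs (e, sigma) standing for e^sigma.\<close>
type_synonym 'v arb = "'v \<times> ('v \<rightharpoonup> bool)"

fun annot :: "'v lit \<Rightarrow> ('v \<rightharpoonup> bool) \<Rightarrow> 'v arb lit" where
  "annot (Pos x) \<sigma> = Pos (x, \<sigma>)"
| "annot (Neg x) \<sigma> = Neg (x, \<sigma>)"

definition arbiter_vars :: "'v set \<Rightarrow> ('v \<Rightarrow> 'v set) \<Rightarrow> 'v arb set" where
  "arbiter_vars E D = {(e, \<sigma>). e \<in> E \<and> \<sigma> \<in> assignments (D e)}"

text \<open>A partial assignment to a set of arbiter variables, represented as the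
  (consistent) set of arbiter literals it makes true.\<close>
definition partial_arb_assignment :: "'v set \<Rightarrow> ('v \<Rightarrow> 'v set) \<Rightarrow> 'v arb lit set \<Rightarrow> bool" where
  "partial_arb_assignment E D \<tau> \<longleftrightarrow>
     (\<forall>l\<in>\<tau>. var l \<in> arbiter_vars E D) \<and> (\<forall>l\<in>\<tau>. negate l \<notin> \<tau>)"

definition restrict_arb :: "'v arb lit set \<Rightarrow> ('v \<rightharpoonup> bool) \<Rightarrow> 'v arb lit set" where
  "restrict_arb \<tau> \<rho> = {l \<in> \<tau>. models \<rho> (snd (var l))}"

definition expand_clause :: "'v set \<Rightarrow> ('v \<Rightarrow> 'v set) \<Rightarrow> 'v clause \<Rightarrow> ('v \<rightharpoonup> bool) \<Rightarrow> 'v arb clause" where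
  "expand_clause E D C \<sigma> = {annot x (\<sigma> |` D (var x)) | x. x \<in> C \<and> var x \<in> E}"

definition expand_cnf :: "'v set \<Rightarrow> 'v set \<Rightarrow> ('v \<Rightarrow> 'v set) \<Rightarrow> 'v cnf \<Rightarrow> ('v \<rightharpoonup> bool) \<Rightarrow> 'v arb cnf" where
  "expand_cnf U E D \<phi> \<rho> =
     {expand_clause E D C \<rho> | C. C \<in> \<phi> \<and> \<not> (\<exists>l\<in>C. var l \<in> U \<and> lit_true \<rho> l)}"

fun sat_lit :: "('a \<Rightarrow> bool) \<Rightarrow> 'a lit \<Rightarrow> bool" where
  "sat_lit \<alpha> (Pos x) = \<alpha> x" | "sat_lit \<alpha> (Neg x) = (\<not> \<alpha> x)"

definition satisfiable_with :: "'a cnf \<Rightarrow> 'a lit set \<Rightarrow> bool" where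
  "satisfiable_with F T \<longleftrightarrow>
     (\<exists>\<alpha>. (\<forall>C\<in>F. \<exists>l\<in>C. sat_lit \<alpha> l) \<and> (\<forall>l\<in>T. sat_lit \<alpha> l))"

inductive expres_derivable :: "'v set \<Rightarrow> 'v set \<Rightarrow> ('v \<Rightarrow> 'v set) \<Rightarrow> 'v cnf \<Rightarrow> 'v arb clause \<Rightarrow> bool"
  for U E D \<phi> where
  axiom: "\<lbrakk> C \<in> \<phi>; \<sigma> \<in> assignments U;
            \<forall>l\<in>C. var l \<in> U \<longrightarrow> \<not> lit_true \<sigma> l \<rbrakk>
          \<Longrightarrow> expres_derivable U E D \<phi> (expand_clause E D C \<sigma>)"
| resolution: "\<lbrakk> expres_derivable U E D \<phi> (C1 \<union> {x});
                 expres_derivable U E D \<phi> (C2 \<union> {negate x}) \<rbrakk>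
          \<Longrightarrow> expres_derivable U E D \<phi> (C1 \<union> C2)"

end

theory Submission
  imports Defs
begin

lemma negate_negate[simp]: "negate (negate l) = l"
  by (cases l) auto

lemma var_negate[simp]: "var (negate l) = var l"
  by (cases l) auto

lemma sat_negate[simp]: "sat_lit \<alpha> (negate l) = (\<not> sat_lit \<alpha> l)"
  by (cases l) auto

lemma core:
  assumes fin: "finite V"
    and closed: "\<And>C1 C2 x. P (C1 \<union> {x}) \<Longrightarrow> P (C2 \<union> {negate x}) \<Longrightarrow> P (C1 \<union> C2)"
    and FP: "\<forall>C\<in>F. P C" and FV: "\<forall>C\<in>F. \<forall>l\<in>C. var l \<in> V"
  shows "card (V - var`T) = n \<Longrightarrow> (\<forall>l\<in>T. negate l \<notin> T)
    \<Longrightarrow> \<not>(\<exists>\<alpha>. (\<forall>C\<in>F. \<exists>l\<in>C. sat_lit \<alpha> l) \<and> (\<forall>l\<in>T. sat_lit \<alpha> l))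
    \<Longrightarrow> \<exists>C. C \<subseteq> negate`T \<and> P C"
proof (induction n arbitrary: T rule: less_induct)
  case (less n T)
  show ?case
  proof (cases "V \<subseteq> var ` T")
    case True
    define \<alpha> where "\<alpha> x = (Pos x \<in> T)" for x
    have satT: "sat_lit \<alpha> l" if "l \<in> T" for l
    proof (cases l)
      case (Pos x) then show ?thesis using that by (simp add: \<alpha>_def)
    next
      case (Neg x) then show ?thesis using that less.prems(2) by (force simp: \<alpha>_def)
    qed
    then obtain C where C: "C \<in> F" "\<forall>l\<in>C. \<not> sat_lit \<alpha> l" using less.prems(3) by blast
    have "C \<subseteq> negate ` T"
    proof
      fix l assume l: "l \<in> C"
      then have "var l \<in> var ` T" using FV C True by blast
      then obtain k where k: "k \<in> T" "var k = var l" by auto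
      have "k = l \<or> k = negate l" using k(2) by (cases k; cases l) auto
      moreover have "k \<noteq> l" using satT[OF k(1)] C l by auto
      ultimately have "negate l \<in> T" using k by auto
      then show "l \<in> negate ` T" by (metis image_eqI negate_negate)
    qed
    then show ?thesis using C FP by blast
  next
    case False
    then obtain x where x: "x \<in> V" "x \<notin> var ` T" by auto
    have cons: "\<forall>l\<in>T \<union> {y}. negate l \<notin> T \<union> {y}" if "var y = x" for y
      proof
      fix l assume l: "l \<in> T \<union> {y}"
      show "negate l \<notin> T \<union> {y}"
      proof
        assume n: "negate l \<in> T \<union> {y}"
        have "negate y \<notin> T" using x(2) that by (metis image_eqI var_negate)
        moreover have "y \<notin> T" using x(2) that by blast
        moreover have "negate l \<noteq> l" by (cases l) auto
        ultimately show False using l n less.prems(2) by (metis Un_iff negate_negate singletonD)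
      qed
    qed
    have card: "card (V - var ` (T \<union> {y})) < n" if "var y = x" for y
    proof -
      have "V - var ` (T \<union> {y}) = (V - var ` T) - {x}" using that by auto
      moreover have "x \<in> V - var ` T" using x by auto
      ultimately show ?thesis using less.prems(1) fin
        by (metis card_Diff1_less finite_Diff)
    qed
    have uns: "\<not>(\<exists>\<alpha>. (\<forall>C\<in>F. \<exists>l\<in>C. sat_lit \<alpha> l) \<and> (\<forall>l\<in>T \<union> {y}. sat_lit \<alpha> l))" for y
      using less.prems(3) by blast
    obtain C1 where C1: "C1 \<subseteq> negate ` (T \<union> {Neg x})" "P C1"
      using less.IH[OF card[of "Neg x"] refl cons[of "Neg x"] uns[of "Neg x"]] by auto
    obtain C2 where C2: "C2 \<subseteq> negate ` (T \<union> {Pos x})" "P C2"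
      using less.IH[OF card[of "Pos x"] refl cons[of "Pos x"] uns[of "Pos x"]] by auto
    show ?thesis
    proof (cases "Pos x \<in> C1")
      case False
      then have "C1 \<subseteq> negate ` T" using C1(1) by auto
      then show ?thesis using C1 by blast
    next
      case in1: True
      show ?thesis
      proof (cases "Neg x \<in> C2")
        case False
        then have "C2 \<subseteq> negate ` T" using C2(1) by auto
        then show ?thesis using C2 by blast
      next
        case True
        have e1: "C1 = (C1 - {Pos x}) \<union> {Pos x}" using in1 by auto
        have e2: "C2 = (C2 - {Neg x}) \<union> {negate (Pos x)}" using True by auto
        have "P ((C1 - {Pos x}) \<union> (C2 - {Neg x}))"
          using closed[of "C1 - {Pos x}" "Pos x" "C2 - {Neg x}"] C1(2) C2(2) e1 e2 by metis
        moreover have "(C1 - {Pos x}) \<union> (C2 - {Neg x}) \<subseteq> negate ` T"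
          using C1(1) C2(1) by auto
        ultimately show ?thesis by blast
      qed
    qed
  qed
qed

theorem lemma6:
  fixes U E :: "'v set" and D :: "'v \<Rightarrow> 'v set" and \<phi> :: "'v cnf"
    and \<tau> :: "'v arb lit set" and \<rho> :: "'v \<rightharpoonup> bool"
  assumes "dqbf U E D \<phi>"
    and "partial_arb_assignment E D \<tau>"
    and "\<rho> \<in> assignments U"
    and "\<not> satisfiable_with (expand_cnf U E D \<phi> \<rho>) (restrict_arb \<tau> \<rho>)"
  shows "\<exists>C. C \<subseteq> negate ` restrict_arb \<tau> \<rho> \<and> expres_derivable U E D \<phi> C"
proof -
  let ?F = "expand_cnf U E D \<phi> \<rho>"
  let ?T = "restrict_arb \<tau> \<rho>"
  have finphi: "finite \<phi>" and finC: "\<forall>C\<in>\<phi>. finite C" using assms(1) by (auto simp: dqbf_def)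
  have finF: "finite ?F"
  proof -
    have "?F \<subseteq> (\<lambda>C. expand_clause E D C \<rho>) ` \<phi>" by (auto simp: expand_cnf_def)
    then show ?thesis using finphi finite_subset by blast
  qed
  have finCl: "finite X" if XF: "X \<in> ?F" for X
  proof -
    obtain C where C: "C \<in> \<phi>" "X = expand_clause E D C \<rho>" using XF unfolding expand_cnf_def by blast
    have "X \<subseteq> (\<lambda>x. annot x (\<rho> |` D (var x))) ` C" using C by (auto simp: expand_clause_def)
    then show ?thesis using finC C(1) finite_subset by blast
  qed
  define V where "V = var ` \<Union> ?F"
  have finV: "finite V" unfolding V_def using finF finCl by blast
  have FP: "\<forall>C\<in>?F. expres_derivable U E D \<phi> C"
  proof
    fix X assume "X \<in> ?F"
    then obtain C where C: "C \<in> \<phi>" "X = expand_clause E D C \<rho>"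
      "\<not> (\<exists>l\<in>C. var l \<in> U \<and> lit_true \<rho> l)" by (auto simp: expand_cnf_def)
    show "expres_derivable U E D \<phi> X" using C assms(3)
      by (auto intro: expres_derivable.axiom)
  qed
  have FV: "\<forall>C\<in>?F. \<forall>l\<in>C. var l \<in> V" unfolding V_def by blast
  have cons: "\<forall>l\<in>?T. negate l \<notin> ?T" using assms(2)
    by (auto simp: partial_arb_assignment_def restrict_arb_def)
  have uns: "\<not>(\<exists>\<alpha>. (\<forall>C\<in>?F. \<exists>l\<in>C. sat_lit \<alpha> l) \<and> (\<forall>l\<in>?T. sat_lit \<alpha> l))"
    using assms(4) unfolding satisfiable_with_def .
  show ?thesis
    by (rule core[OF finV _ FP FV refl cons uns]) (rule expres_derivable.resolution)
qed

end
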